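(* Let $M$ be a universal semi-POVM and let $x\in\mathbb{C}^N$ be computable with $\|x\|=1$. Then the map $\Sigma^*\ni s\mapsto x^\dagger M(s)x$ is a universal probability.
   Context: $N$ is a fixed positive integer; $\Sigma^*$ is the set of finite binary strings. A vector $x\in\mathbb{C}^N$ is computable if each component is $a+ib$ with $a,b$ computable real numbers. $\mathrm{Her}(N)$ is the set of $N\times N$ Hermitian matrices and $\mathrm{Her}_Q(N)$ those with entries in $\{a+ib:a,b\in\mathbb{Q}\}$; $A\leqslant B$ means $B-A$ is positive semi-definite. A lower-computable semi-measure is a function $r:\Sigma^*\to[0,\infty)$ with $\sum_s r(s)\le 1$ such that there is a total recursive $f:\mathbb{N}\times\Sigma^*\to\mathbb{Q}$ with $\lim_{n}f(n,s)=r(s)$ and $f(n,s)\le f(n+1,s)$ for all $n,s$. A universal probability is a lower-computable semi-measure $m$ such that for every lower-computable semi-measure $r$ there is $c>0$ with $c\,r(s)\le m(s)$ for all $s$. A semi-POVM on $\Sigma^*$ is a map $R:\Sigma^*\to\mathrm{Her}(N)$ with $0\leqslant R(s)$ for all $s$ and $\sum_s R(s)\leqslant I$. A lower-computable semi-POVM is a semi-POVM $R$ for which there is a total recursive $f:\mathbb{N}\times\Sigma^*\to\mathrm{Her}_Q(N)$ with $\lim_{n}f(n,s)=R(s)$ and $f(n,s)\leqslant R(s)$ for all $n,s$. A universal semi-POVM is a lower-computable semi-POVM $M$ such that for every lower-computable semi-POVM $R$ there is $c>0$ with $c\,R(s)\leqslant M(s)$ for all $s\in\Sigma^*$. *)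

theory Defs
  imports "HOL-Analysis.Analysis" "HOL-Library.Nat_Bijection"
begin

datatype recf = Zero | Succ | Proj nat | Comp recf "recf list" | Prim recf recf | Mu recf

inductive eval :: "recf \<Rightarrow> nat list \<Rightarrow> nat \<Rightarrow> bool" where
  eval_Zero: "eval Zero xs 0"
| eval_Succ: "eval Succ (x # xs) (Suc x)"
| eval_Proj: "i < length xs \<Longrightarrow> eval (Proj i) xs (xs ! i)"
| eval_Comp: "list_all2 (\<lambda>g y. eval g xs y) gs ys \<Longrightarrow> eval f ys z \<Longrightarrow> eval (Comp f gs) xs z"
| eval_Prim0: "eval f xs y \<Longrightarrow> eval (Prim f g) (0 # xs) y"
| eval_PrimS: "eval (Prim f g) (n # xs) y \<Longrightarrow> eval g (y # n # xs) z \<Longrightarrow> eval (Prim f g) (Suc n # xs) z"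
| eval_Mu: "eval f (n # xs) 0 \<Longrightarrow> (\<forall>m<n. \<exists>y. 0 < y \<and> eval f (m # xs) y) \<Longrightarrow> eval (Mu f) xs n"

text \<open>Finite binary strings are bool lists; bijective (length-lexicographic) code into nat.\<close>
fun bcode :: "bool list \<Rightarrow> nat" where
  "bcode [] = 0"
| "bcode (b # s) = 2 * bcode s + (if b then 2 else 1)"

definition rcode :: "rat \<Rightarrow> nat" where
  "rcode q = (case quotient_of q of (a, b) \<Rightarrow> prod_encode (int_encode a, int_encode b))"

definition rec_nat_rat :: "(nat \<Rightarrow> rat) \<Rightarrow> bool" where
  "rec_nat_rat q \<longleftrightarrow> (\<exists>r. \<forall>n. eval r [n] (rcode (q n)))"

definition rec_fun :: "(nat \<Rightarrow> bool list \<Rightarrow> rat) \<Rightarrow> bool" where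
  "rec_fun f \<longleftrightarrow> (\<exists>r. \<forall>n s. eval r [prod_encode (n, bcode s)] (rcode (f n s)))"

definition computable_real :: "real \<Rightarrow> bool" where
  "computable_real a \<longleftrightarrow> (\<exists>q. rec_nat_rat q \<and> (\<forall>n. \<bar>a - of_rat (q n)\<bar> \<le> (1/2) ^ n))"

definition computable_vec :: "complex ^ 'n \<Rightarrow> bool" where
  "computable_vec x \<longleftrightarrow> (\<forall>i. computable_real (Re (x $ i)) \<and> computable_real (Im (x $ i)))"

definition qform :: "complex ^ 'n ^ 'n \<Rightarrow> complex ^ 'n \<Rightarrow> complex" where
  "qform A v = (\<Sum>i\<in>UNIV. \<Sum>j\<in>UNIV. cnj (v $ i) * (A $ i $ j) * v $ j)"

definition hermitian :: "complex ^ 'n ^ 'n \<Rightarrow> bool" where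
  "hermitian A \<longleftrightarrow> (\<forall>i j. A $ i $ j = cnj (A $ j $ i))"

definition psd :: "complex ^ 'n ^ 'n \<Rightarrow> bool" where
  "psd A \<longleftrightarrow> hermitian A \<and> (\<forall>v. 0 \<le> Re (qform A v))"

definition loewner_le :: "complex ^ 'n ^ 'n \<Rightarrow> complex ^ 'n ^ 'n \<Rightarrow> bool" where
  "loewner_le A B \<longleftrightarrow> psd (B - A)"

definition semi_measure :: "(bool list \<Rightarrow> real) \<Rightarrow> bool" where
  "semi_measure r \<longleftrightarrow> (\<forall>s. 0 \<le> r s) \<and> (\<forall>F. finite F \<longrightarrow> sum r F \<le> 1)"

definition lower_computable_sm :: "(bool list \<Rightarrow> real) \<Rightarrow> bool" where
  "lower_computable_sm r \<longleftrightarrow> semi_measure r \<and>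
     (\<exists>f. rec_fun f \<and> (\<forall>s. (\<lambda>n. real_of_rat (f n s)) \<longlonglongrightarrow> r s)
          \<and> (\<forall>n s. f n s \<le> f (Suc n) s))"

definition universal_probability :: "(bool list \<Rightarrow> real) \<Rightarrow> bool" where
  "universal_probability m \<longleftrightarrow> lower_computable_sm m \<and>
     (\<forall>r. lower_computable_sm r \<longrightarrow> (\<exists>c>0. \<forall>s. c * r s \<le> m s))"

definition semi_POVM :: "(bool list \<Rightarrow> complex ^ 'n ^ 'n) \<Rightarrow> bool" where
  "semi_POVM R \<longleftrightarrow> (\<forall>s. hermitian (R s) \<and> loewner_le 0 (R s)) \<and>
     (\<forall>F. finite F \<longrightarrow> loewner_le (sum R F) (mat 1))"

definition rec_herQ_fun :: "(nat \<Rightarrow> bool list \<Rightarrow> complex ^ 'n ^ 'n) \<Rightarrow> bool" where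
  "rec_herQ_fun f \<longleftrightarrow> (\<forall>n s. hermitian (f n s)) \<and>
     (\<forall>i j. \<exists>gre gim. rec_fun gre \<and> rec_fun gim \<and>
        (\<forall>n s. f n s $ i $ j = Complex (of_rat (gre n s)) (of_rat (gim n s))))"

definition lower_computable_sPOVM :: "(bool list \<Rightarrow> complex ^ 'n ^ 'n) \<Rightarrow> bool" where
  "lower_computable_sPOVM R \<longleftrightarrow> semi_POVM R \<and>
     (\<exists>f. rec_herQ_fun f \<and> (\<forall>s. (\<lambda>n. f n s) \<longlonglongrightarrow> R s) \<and> (\<forall>n s. loewner_le (f n s) (R s)))"

definition universal_sPOVM :: "(bool list \<Rightarrow> complex ^ 'n ^ 'n) \<Rightarrow> bool" where
  "universal_sPOVM M \<longleftrightarrow> lower_computable_sPOVM M \<and>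
     (\<forall>R :: bool list \<Rightarrow> complex ^ 'n ^ 'n. lower_computable_sPOVM R \<longrightarrow>
        (\<exists>c>0. \<forall>s. loewner_le (c *\<^sub>R R s) (M s)))"

end

theory Submission
  imports Defs
begin

definition rc :: "nat \<Rightarrow> (nat list \<Rightarrow> nat) \<Rightarrow> bool" where
  "rc k F \<longleftrightarrow> (\<exists>r. \<forall>xs. length xs = k \<longrightarrow> eval r xs (F xs))"

lemma rc_cong: "rc k F \<Longrightarrow> (\<And>xs. length xs = k \<Longrightarrow> F xs = G xs) \<Longrightarrow> rc k G"
  unfolding rc_def by metis

lemma rc_const: "rc k (\<lambda>_. c)"
proof (induction c)
  case 0
  show ?case unfolding rc_def by (intro exI[of _ Zero]) (auto intro: eval_Zero)
next
  case (Suc c)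
  then obtain r where r: "\<forall>xs. length xs = k \<longrightarrow> eval r xs c" unfolding rc_def by auto
  show ?case unfolding rc_def
  proof (intro exI[of _ "Comp Succ [r]"] allI impI)
    fix xs :: "nat list" assume "length xs = k"
    then show "eval (Comp Succ [r]) xs (Suc c)"
      using r by (intro eval_Comp[where ys="[c]"]) (auto intro: eval_Succ[of c "[]", simplified])
  qed
qed

lemma rc_proj: "i < k \<Longrightarrow> rc k (\<lambda>xs. xs ! i)"
  unfolding rc_def by (intro exI[of _ "Proj i"]) (auto intro: eval_Proj)

lemma rc_comp:
  assumes "rc m F" "length Gs = m" "\<forall>G\<in>set Gs. rc k G"
  shows "rc k (\<lambda>xs. F (map (\<lambda>G. G xs) Gs))"
proof -
  have "\<exists>rs. \<forall>xs. length xs = k \<longrightarrow> list_all2 (\<lambda>g y. eval g xs y) rs (map (\<lambda>G. G xs) Gs)"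
    using assms(3)
  proof (induction Gs)
    case Nil
    show ?case by (intro exI[of _ "[]"]) simp
  next
    case (Cons G Gs)
    then obtain rs where rs: "\<forall>xs. length xs = k \<longrightarrow> list_all2 (\<lambda>g y. eval g xs y) rs (map (\<lambda>G. G xs) Gs)"
      by auto
    from Cons.prems obtain r where r: "\<forall>xs. length xs = k \<longrightarrow> eval r xs (G xs)" unfolding rc_def by auto
    show ?case by (intro exI[of _ "r # rs"]) (simp add: rs r)
  qed
  then obtain rs where rs: "\<forall>xs. length xs = k \<longrightarrow> list_all2 (\<lambda>g y. eval g xs y) rs (map (\<lambda>G. G xs) Gs)"
    by auto
  from assms(1) obtain f where f: "\<forall>ys. length ys = m \<longrightarrow> eval f ys (F ys)" unfolding rc_def by auto
  show ?thesis unfolding rc_def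
  proof (intro exI[of _ "Comp f rs"] allI impI)
    fix xs :: "nat list" assume "length xs = k"
    then show "eval (Comp f rs) xs (F (map (\<lambda>G. G xs) Gs))"
      using rs f assms(2) by (intro eval_Comp) auto
  qed
qed

fun natrec :: "(nat list \<Rightarrow> nat) \<Rightarrow> (nat list \<Rightarrow> nat) \<Rightarrow> nat \<Rightarrow> nat list \<Rightarrow> nat" where
  "natrec F G 0 ys = F ys"
| "natrec F G (Suc n) ys = G (natrec F G n ys # n # ys)"

lemma rc_prim:
  assumes "rc k F" "rc (Suc (Suc k)) G"
  shows "rc (Suc k) (\<lambda>xs. natrec F G (hd xs) (tl xs))"
proof -
  obtain f where f: "\<forall>ys. length ys = k \<longrightarrow> eval f ys (F ys)" using assms(1) unfolding rc_def by auto
  obtain g where g: "\<forall>ys. length ys = Suc (Suc k) \<longrightarrow> eval g ys (G ys)" using assms(2) unfolding rc_def by auto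
  have *: "eval (Prim f g) (n # ys) (natrec F G n ys)" if "length ys = k" for n ys
  proof (induction n)
    case 0 then show ?case using f that by (auto intro: eval_Prim0)
  next
    case (Suc n) then show ?case using g that by (auto intro: eval_PrimS)
  qed
  show ?thesis unfolding rc_def
  proof (intro exI[of _ "Prim f g"] allI impI)
    fix xs :: "nat list" assume "length xs = Suc k"
    then obtain n ys where "xs = n # ys" "length ys = k" by (cases xs) auto
    then show "eval (Prim f g) xs (natrec F G (hd xs) (tl xs))" using * by simp
  qed
qed

lemma rc_mu:
  assumes "rc (Suc k) F" "\<And>xs. length xs = k \<Longrightarrow> \<exists>n. F (n # xs) = 0"
  shows "rc k (\<lambda>xs. LEAST n. F (n # xs) = 0)"
proof -
  obtain f where f: "\<forall>ys. length ys = Suc k \<longrightarrow> eval f ys (F ys)" using assms(1) unfolding rc_def by auto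
  show ?thesis unfolding rc_def
  proof (intro exI[of _ "Mu f"] allI impI)
    fix xs :: "nat list" assume len: "length xs = k"
    define n where "n = (LEAST n. F (n # xs) = 0)"
    have "F (n # xs) = 0" unfolding n_def using assms(2)[OF len] by (rule LeastI_ex)
    moreover have "F (m # xs) \<noteq> 0" if "m < n" for m using not_less_Least[OF that[unfolded n_def]] .
    ultimately show "eval (Mu f) xs (LEAST n. F (n # xs) = 0)"
      unfolding n_def[symmetric] using f len by (intro eval_Mu) (metis length_Cons, metis length_Cons neq0_conv)
  qed
qed

lemma rc_comp1: "rc 1 F \<Longrightarrow> rc k G \<Longrightarrow> rc k (\<lambda>xs. F [G xs])"
  using rc_comp[of 1 F "[G]" k] by simp

lemma rc_comp2: "rc 2 F \<Longrightarrow> rc k G \<Longrightarrow> rc k H \<Longrightarrow> rc k (\<lambda>xs. F [G xs, H xs])"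
  using rc_comp[of 2 F "[G, H]" k] by simp

lemma rc_comp3: "rc 3 F \<Longrightarrow> rc k G \<Longrightarrow> rc k H \<Longrightarrow> rc k J \<Longrightarrow> rc k (\<lambda>xs. F [G xs, H xs, J xs])"
  using rc_comp[of 3 F "[G, H, J]" k] by (simp add: numeral_3_eq_3)

lemma rc_tl: "rc k F \<Longrightarrow> rc (Suc k) (\<lambda>xs. F (tl xs))"
proof -
  assume a: "rc k F"
  have "rc (Suc k) (\<lambda>xs. F (map (\<lambda>G. G xs) (map (\<lambda>i xs. xs ! Suc i) [0..<k])))"
    by (rule rc_comp[OF a]) (auto intro: rc_proj)
  then show ?thesis
    by (rule rc_cong) (auto simp: map_nth[symmetric] nth_tl intro!: arg_cong[where f=F] nth_equalityI)
qed

named_theorems rc_intros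
declare rc_const[rc_intros] rc_proj[rc_intros]

lemma rc_cong': "rc k F \<Longrightarrow> k = k' \<Longrightarrow> (\<And>xs. length xs = k \<Longrightarrow> F xs = G xs) \<Longrightarrow> rc k' G"
  unfolding rc_def by metis

lemma rc_bin:
  assumes "rc 2 B" "\<And>a b. B [a, b] = f a b" "rc k G" "rc k H"
  shows "rc k (\<lambda>xs. f (G xs) (H xs))"
  using rc_comp2[OF assms(1) assms(3,4)] by (simp add: assms(2))

lemma rc_un:
  assumes "rc 1 B" "\<And>a. B [a] = f a" "rc k G"
  shows "rc k (\<lambda>xs. f (G xs))"
  using rc_comp1[OF assms(1) assms(3)] by (simp add: assms(2))

lemma rc_Suc1: "rc 1 (\<lambda>xs. Suc (xs ! 0))"
  unfolding rc_def by (intro exI[of _ Succ]) (auto simp: length_Suc_conv intro: eval_Succ)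

lemma rc_Suc[rc_intros]: "rc k G \<Longrightarrow> rc k (\<lambda>xs. Suc (G xs))"
  by (rule rc_un[OF rc_Suc1]) auto

lemma natrec_add: "natrec (\<lambda>ys. ys ! 0) (\<lambda>zs. Suc (zs ! 0)) a [b] = a + b"
  by (induction a) auto

lemma rc_add2: "rc 2 (\<lambda>xs. xs ! 0 + xs ! 1)"
proof -
  have "rc (Suc 1) (\<lambda>xs. natrec (\<lambda>ys. ys ! 0) (\<lambda>zs. Suc (zs ! 0)) (hd xs) (tl xs))"
    by (rule rc_prim) (intro rc_intros; simp)+
  then show ?thesis
    by (rule rc_cong') (auto simp: length_Suc_conv natrec_add[simplified])
qed

lemma rc_add[rc_intros]: "rc k G \<Longrightarrow> rc k H \<Longrightarrow> rc k (\<lambda>xs. G xs + H xs)"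
  by (rule rc_bin[OF rc_add2]) auto

lemma natrec_mult: "natrec (\<lambda>ys. 0) (\<lambda>zs. zs ! 0 + zs ! 2) a [b] = a * b"
  by (induction a) auto

lemma rc_mult2: "rc 2 (\<lambda>xs. xs ! 0 * xs ! 1)"
proof -
  have "rc (Suc 1) (\<lambda>xs. natrec (\<lambda>ys. 0) (\<lambda>zs. zs ! 0 + zs ! 2) (hd xs) (tl xs))"
    by (rule rc_prim) (intro rc_intros; simp)+
  then show ?thesis
    by (rule rc_cong') (auto simp: length_Suc_conv natrec_mult[simplified])
qed

lemma rc_mult[rc_intros]: "rc k G \<Longrightarrow> rc k H \<Longrightarrow> rc k (\<lambda>xs. G xs * H xs)"
  by (rule rc_bin[OF rc_mult2]) auto

lemma natrec_pred: "natrec (\<lambda>ys. 0) (\<lambda>zs. zs ! 1) a [] = a - 1"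
  by (induction a) auto

lemma rc_pred1: "rc 1 (\<lambda>xs. xs ! 0 - 1)"
proof -
  have "rc (Suc 0) (\<lambda>xs. natrec (\<lambda>ys. 0) (\<lambda>zs. zs ! 1) (hd xs) (tl xs))"
    by (rule rc_prim) (intro rc_intros; simp)+
  then show ?thesis
    by (rule rc_cong') (auto simp: length_Suc_conv natrec_pred[simplified])
qed

lemma rc_pred: "rc k G \<Longrightarrow> rc k (\<lambda>xs. G xs - 1)"
  by (rule rc_un[OF rc_pred1]) auto

lemma natrec_sub: "natrec (\<lambda>ys. ys ! 0) (\<lambda>zs. zs ! 0 - 1) a [b] = b - a"
  by (induction a) auto

lemma rc_sub2: "rc 2 (\<lambda>xs. xs ! 1 - xs ! 0)"
proof -
  have "rc (Suc 1) (\<lambda>xs. natrec (\<lambda>ys. ys ! 0) (\<lambda>zs. zs ! 0 - 1) (hd xs) (tl xs))"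
    by (rule rc_prim) (intro rc_intros rc_pred; simp)+
  then show ?thesis
    by (rule rc_cong') (auto simp: length_Suc_conv natrec_sub[simplified])
qed

lemma rc_sub[rc_intros]: "rc k G \<Longrightarrow> rc k H \<Longrightarrow> rc k (\<lambda>xs. G xs - H xs)"
  using rc_bin[OF rc_sub2, of "\<lambda>a b. b - a" k H G] by auto

lemma rc_if0[rc_intros]:
  assumes "rc k C" "rc k A" "rc k B"
  shows "rc k (\<lambda>xs. if C xs = 0 then A xs else B xs)"
proof -
  have "rc k (\<lambda>xs. A xs * (1 - C xs) + B xs * (1 - (1 - C xs)))"
    by (intro rc_intros assms)
  then show ?thesis by (rule rc_cong) auto
qed

lemma rc_ifle[rc_intros]:
  assumes "rc k G" "rc k H" "rc k A" "rc k B"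
  shows "rc k (\<lambda>xs. if G xs \<le> H xs then A xs else B xs)"
proof -
  have "rc k (\<lambda>xs. if G xs - H xs = 0 then A xs else B xs)"
    by (intro rc_intros assms)
  then show ?thesis by (rule rc_cong) auto
qed

lemma rc_max[rc_intros]: "rc k G \<Longrightarrow> rc k H \<Longrightarrow> rc k (\<lambda>xs. max (G xs) (H xs))"
  unfolding max_def by (intro rc_intros)

lemma least_div2: "(LEAST d. a \<le> Suc (2 * d)) = a div 2"
  by (rule Least_equality) auto

lemma rc_div2_1: "rc 1 (\<lambda>xs. xs ! 0 div 2)"
proof -
  have "rc (Suc 0) (\<lambda>xs. LEAST n. (\<lambda>zs. Suc (zs ! 1) - (2 * zs ! 0 + 2)) (n # xs) = 0)"
  proof (rule rc_mu)
    show "rc (Suc (Suc 0)) (\<lambda>zs. Suc (zs ! 1) - (2 * zs ! 0 + 2))" by (intro rc_intros) auto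
    fix xs :: "nat list" assume "length xs = Suc 0"
    show "\<exists>n. Suc ((n # xs) ! 1) - (2 * (n # xs) ! 0 + 2) = 0"
      by (intro exI[of _ "xs ! 0"]) auto
  qed
  then show ?thesis by (rule rc_cong') (auto simp: length_Suc_conv least_div2)
qed

lemma rc_div2[rc_intros]: "rc k G \<Longrightarrow> rc k (\<lambda>xs. G xs div 2)"
  by (rule rc_un[OF rc_div2_1]) auto

lemma rc_mod2[rc_intros]: "rc k G \<Longrightarrow> rc k (\<lambda>xs. G xs mod 2)"
proof -
  assume "rc k G"
  then have "rc k (\<lambda>xs. G xs - 2 * (G xs div 2))" by (intro rc_intros)
  then show ?thesis by (rule rc_cong) (simp add: minus_mult_div_eq_mod)
qed

lemma rc_ifeven[rc_intros]:
  assumes "rc k G" "rc k A" "rc k B"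
  shows "rc k (\<lambda>xs. if even (G xs) then A xs else B xs)"
proof -
  have "rc k (\<lambda>xs. if G xs mod 2 = 0 then A xs else B xs)"
    by (intro rc_intros assms)
  then show ?thesis by (rule rc_cong) (auto simp: even_iff_mod_2_eq_zero)
qed

lemma rc_triangle[rc_intros]: "rc k G \<Longrightarrow> rc k (\<lambda>xs. triangle (G xs))"
  unfolding triangle_def by (intro rc_intros)

lemma rc_prod_encode[rc_intros]: "rc k G \<Longrightarrow> rc k H \<Longrightarrow> rc k (\<lambda>xs. prod_encode (G xs, H xs))"
  unfolding prod_encode_def by (simp, intro rc_intros)

definition tdec :: "nat \<Rightarrow> nat" where
  "tdec c = (LEAST t. Suc c - triangle (Suc t) = 0)"

lemma triangle_ge: "n \<le> triangle n"
  by (induction n) auto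

lemma prod_decode_tdec:
  "prod_decode c = (c - triangle (tdec c), tdec c - (c - triangle (tdec c)))"
proof -
  define t where "t = tdec c"
  have ex: "Suc c - triangle (Suc c) = 0" using triangle_ge[of c] by simp
  have c1: "c < triangle (Suc t)"
    using LeastI[of "\<lambda>t. Suc c - triangle (Suc t) = 0", OF ex] unfolding t_def tdec_def by simp
  have c2: "triangle t \<le> c"
  proof (cases t)
    case 0 then show ?thesis by simp
  next
    case (Suc t')
    then have "t' < t" by simp
    then have "\<not> (Suc c - triangle (Suc t') = 0)"
      unfolding t_def tdec_def by (rule not_less_Least)
    then show ?thesis using Suc by simp
  qed
  define a where "a = c - triangle t"
  have "a \<le> t" using c1 c2 unfolding a_def by simp
  then have "prod_encode (a, t - a) = c" unfolding prod_encode_def a_def using c2 by simp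
  then have "prod_decode c = (a, t - a)" by (metis prod_encode_inverse)
  then show ?thesis unfolding a_def t_def by simp
qed

lemma rc_tdec1: "rc 1 (\<lambda>xs. tdec (xs ! 0))"
proof -
  have "rc (Suc 0) (\<lambda>xs. LEAST n. (\<lambda>zs. Suc (zs ! 1) - triangle (Suc (zs ! 0))) (n # xs) = 0)"
  proof (rule rc_mu)
    show "rc (Suc (Suc 0)) (\<lambda>zs. Suc (zs ! 1) - triangle (Suc (zs ! 0)))" by (intro rc_intros) auto
    fix xs :: "nat list" assume "length xs = Suc 0"
    show "\<exists>n. Suc ((n # xs) ! 1) - triangle (Suc ((n # xs) ! 0)) = 0"
      using triangle_ge[of "xs ! 0"] by (intro exI[of _ "xs ! 0"]) auto
  qed
  then show ?thesis by (rule rc_cong') (auto simp: length_Suc_conv tdec_def)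
qed

lemma rc_tdec: "rc k G \<Longrightarrow> rc k (\<lambda>xs. tdec (G xs))"
  by (rule rc_un[OF rc_tdec1]) auto

lemma rc_fst_decode[rc_intros]: "rc k G \<Longrightarrow> rc k (\<lambda>xs. fst (prod_decode (G xs)))"
  unfolding prod_decode_tdec by (simp, intro rc_intros rc_tdec)

lemma rc_snd_decode[rc_intros]: "rc k G \<Longrightarrow> rc k (\<lambda>xs. snd (prod_decode (G xs)))"
  unfolding prod_decode_tdec by (simp, intro rc_intros rc_tdec)

lemma natrec_pow2: "natrec (\<lambda>ys. 1) (\<lambda>zs. 2 * zs ! 0) a [] = 2 ^ a"
  by (induction a) auto

lemma rc_pow2_1: "rc 1 (\<lambda>xs. 2 ^ (xs ! 0))"
proof -
  have "rc (Suc 0) (\<lambda>xs. natrec (\<lambda>ys. 1) (\<lambda>zs. 2 * zs ! 0) (hd xs) (tl xs))"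
    by (rule rc_prim) (intro rc_intros; simp)+
  then show ?thesis
    by (rule rc_cong') (auto simp: length_Suc_conv natrec_pow2[simplified])
qed

lemma rc_pow2[rc_intros]: "rc k G \<Longrightarrow> rc k (\<lambda>xs. 2 ^ (G xs))"
  by (rule rc_un[OF rc_pow2_1]) auto

definition Pc :: "nat \<Rightarrow> nat" where "Pc u = (if even u then u div 2 else 0)"
definition Mc :: "nat \<Rightarrow> nat" where "Mc u = (if even u then 0 else Suc (u div 2))"
definition PP :: "nat \<Rightarrow> nat" where "PP c = Pc (fst (prod_decode c))"
definition MM :: "nat \<Rightarrow> nat" where "MM c = Mc (fst (prod_decode c))"
definition BB :: "nat \<Rightarrow> nat" where "BB c = max 1 (snd (prod_decode c) div 2)"
definition rdec :: "nat \<Rightarrow> rat" where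
  "rdec c = (of_nat (PP c) - of_nat (MM c)) / of_nat (BB c)"

lemma rc_Pc[rc_intros]: "rc k G \<Longrightarrow> rc k (\<lambda>xs. Pc (G xs))"
  unfolding Pc_def by (intro rc_intros)
lemma rc_Mc[rc_intros]: "rc k G \<Longrightarrow> rc k (\<lambda>xs. Mc (G xs))"
  unfolding Mc_def by (intro rc_intros)
lemma rc_PP[rc_intros]: "rc k G \<Longrightarrow> rc k (\<lambda>xs. PP (G xs))"
  unfolding PP_def by (intro rc_intros)
lemma rc_MM[rc_intros]: "rc k G \<Longrightarrow> rc k (\<lambda>xs. MM (G xs))"
  unfolding MM_def by (intro rc_intros)
lemma rc_BB[rc_intros]: "rc k G \<Longrightarrow> rc k (\<lambda>xs. BB (G xs))"
  unfolding BB_def by (intro rc_intros)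

lemma BB_pos: "BB c \<ge> 1" unfolding BB_def by simp

lemma int_decode_PcMc: "int_decode u = int (Pc u) - int (Mc u)"
  unfolding int_decode_def sum_decode_def Pc_def Mc_def by auto

lemma int_encode_nonneg: "0 \<le> i \<Longrightarrow> int_encode i = 2 * nat i"
  unfolding int_encode_def sum_encode_def by simp

lemma rcode_parts:
  assumes "quotient_of q = (a, b)"
  shows "prod_decode (rcode q) = (int_encode a, int_encode b)"
  using assms unfolding rcode_def by simp

lemma rdec_rcode[simp]: "rdec (rcode q) = q"
proof -
  obtain a b where ab: "quotient_of q = (a, b)" by (cases "quotient_of q") auto
  have b: "b > 0" using quotient_of_denom_pos[OF ab] .
  have "int (PP (rcode q)) - int (MM (rcode q)) = a"
    using int_decode_PcMc[of "int_encode a"] rcode_parts[OF ab] unfolding PP_def MM_def by simp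
  then have "of_nat (PP (rcode q)) - of_nat (MM (rcode q)) = (of_int a :: rat)"
    by (metis of_int_diff of_int_of_nat_eq)
  moreover have "BB (rcode q) = nat b"
    using rcode_parts[OF ab] b unfolding BB_def by (simp add: int_encode_nonneg)
  ultimately show ?thesis unfolding rdec_def using b quotient_of_div[OF ab] by simp
qed

lemma triangle_mono: "a \<le> b \<Longrightarrow> triangle a \<le> triangle b"
  by (induction b rule: dec_induct) auto

lemma prod_encode_mono: "a \<le> a' \<Longrightarrow> b \<le> b' \<Longrightarrow> prod_encode (a, b) \<le> prod_encode (a', b')"
  unfolding prod_encode_def using triangle_mono[of "a + b" "a' + b'"] by simp

lemma int_encode_mult_mono:
  assumes "k \<ge> 1" shows "int_encode a \<le> int_encode (k * a)"
proof (cases "0 \<le> a")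
  case True
  then have "a \<le> k * a" using assms by (simp add: mult_le_cancel_right1)
  then show ?thesis using True assms unfolding int_encode_def sum_encode_def by auto
next
  case False
  then have "k * a \<le> a" using assms by (simp add: mult_le_cancel_right2)
  then have "nat (- a - 1) \<le> nat (- (k * a) - 1)" by (intro nat_mono) simp
  moreover have "k * a < 0" using False assms by (simp add: mult_pos_neg)
  ultimately show ?thesis using False unfolding int_encode_def sum_encode_def by auto
qed

lemma min_rcode:
  assumes "b' > 0" "of_int a' / of_int b' = q"
  shows "rcode q \<le> prod_encode (int_encode a', int_encode b')"
proof -
  obtain a b where ab: "quotient_of q = (a, b)" by (cases "quotient_of q") auto
  have b: "b > 0" using quotient_of_denom_pos[OF ab] .
  have cop: "coprime a b" using quotient_of_coprime[OF ab] .
  have "of_int a' / of_int b' = (of_int a / of_int b :: rat)" using assms quotient_of_div[OF ab] by simp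
  then have eq: "a' * b = a * b'" using b assms(1)
    by (simp add: field_simps) (metis of_int_eq_iff of_int_mult)
  then have "b dvd a * b'" by (metis dvd_triv_right)
  then have "b dvd b'" using cop by (metis coprime_commute coprime_dvd_mult_right_iff)
  then obtain k where k: "b' = b * k" by (auto simp: dvd_def)
  have kpos: "k \<ge> 1" using k b assms(1) by (metis int_one_le_iff_zero_less zero_less_mult_pos)
  have a': "a' = k * a" using eq k b by (simp add: algebra_simps)
  have "rcode q = prod_encode (int_encode a, int_encode b)" unfolding rcode_def ab by simp
  also have "\<dots> \<le> prod_encode (int_encode (k * a), int_encode (k * b))"
    by (intro prod_encode_mono int_encode_mult_mono kpos)
  finally show ?thesis using a' k by (simp add: mult.commute)
qed

definition npred :: "nat \<Rightarrow> nat \<Rightarrow> nat \<Rightarrow> nat \<Rightarrow> nat" where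
  "npred c P N B = (let u = fst (prod_decode c); v = snd (prod_decode c); b = v div 2 in
     v mod 2 + (1 - b) + ((Pc u * B + N * b) - (P * b + Mc u * B)) + ((P * b + Mc u * B) - (Pc u * B + N * b)))"

lemma npred_zero_iff:
  "npred c P N B = 0 \<longleftrightarrow> even (snd (prod_decode c)) \<and> snd (prod_decode c) div 2 \<ge> 1 \<and>
     Pc (fst (prod_decode c)) * B + N * (snd (prod_decode c) div 2) = P * (snd (prod_decode c) div 2) + Mc (fst (prod_decode c)) * B"
  unfolding npred_def Let_def by auto

lemma normc_zero:
  fixes P N B :: nat
  defines "q \<equiv> (of_nat P - of_nat N) / of_nat (max 1 B) :: rat"
  shows "npred (rcode q) P N (max 1 B) = 0"
proof -
  obtain a b where ab: "quotient_of q = (a, b)" by (cases "quotient_of q") auto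
  have b: "b > 0" using quotient_of_denom_pos[OF ab] .
  have qd: "q = of_int a / of_int b" using quotient_of_div[OF ab] .
  have dec: "prod_decode (rcode q) = (int_encode a, 2 * nat b)"
    using rcode_parts[OF ab] b by (simp add: int_encode_nonneg)
  have "of_int a * of_nat (max 1 B) = (of_nat P - of_nat N) * (of_int b :: rat)"
    using qd b unfolding q_def by (simp add: field_simps)
  then have "a * int (max 1 B) = (int P - int N) * b"
    by (metis (mono_tags) of_int_eq_iff of_int_mult of_int_of_nat_eq of_int_diff)
  then have "(int (Pc (int_encode a)) - int (Mc (int_encode a))) * int (max 1 B) = (int P - int N) * int (nat b)"
    using b int_decode_PcMc[of "int_encode a"] by simp
  then have "int (Pc (int_encode a) * max 1 B + N * nat b) = int (P * nat b + Mc (int_encode a) * max 1 B)"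
    by (simp add: algebra_simps)
  then have "Pc (int_encode a) * max 1 B + N * nat b = P * nat b + Mc (int_encode a) * max 1 B"
    using of_nat_eq_iff by blast
  then show ?thesis
    unfolding npred_zero_iff dec using b by simp
qed

lemma normc:
  fixes P N B :: nat
  defines "q \<equiv> (of_nat P - of_nat N) / of_nat (max 1 B) :: rat"
  shows "(LEAST c. npred c P N (max 1 B) = 0) = rcode q"
proof (rule Least_equality)
  show "npred (rcode q) P N (max 1 B) = 0" unfolding q_def by (rule normc_zero)
next
  fix c assume "npred c P N (max 1 B) = 0"
  then have h: "even (snd (prod_decode c))" "snd (prod_decode c) div 2 \<ge> 1"
     "Pc (fst (prod_decode c)) * max 1 B + N * (snd (prod_decode c) div 2) = P * (snd (prod_decode c) div 2) + Mc (fst (prod_decode c)) * max 1 B"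
    unfolding npred_zero_iff by auto
  define u where "u = fst (prod_decode c)"
  define b' where "b' = snd (prod_decode c) div 2"
  have cuv: "c = prod_encode (u, 2 * b')" unfolding u_def b'_def using h(1)
    by (metis dvd_mult_div_cancel prod.collapse prod_decode_inverse)
  have eqn: "int (Pc u * max 1 B + N * b') = int (P * b' + Mc u * max 1 B)"
    using h(3) unfolding u_def b'_def by simp
  have "int_decode u * int (max 1 B) = (int P - int N) * int b'"
    using eqn unfolding int_decode_PcMc by (simp add: algebra_simps)
  then have "of_int (int_decode u) * of_nat (max 1 B) = (of_nat P - of_nat N) * (of_nat b' :: rat)"
    by (metis (mono_tags) of_int_eq_iff of_int_mult of_int_of_nat_eq of_int_diff)
  then have "of_int (int_decode u) / of_int (int b') = q"
    unfolding q_def using h(2) unfolding b'_def by (simp add: field_simps)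
  then have "rcode q \<le> prod_encode (int_encode (int_decode u), int_encode (int b'))"
    using h(2) unfolding b'_def by (intro min_rcode) auto
  also have "\<dots> = c" using cuv by (simp add: int_encode_nonneg)
  finally show "rcode q \<le> c" .
qed

definition rq :: "nat \<Rightarrow> (nat list \<Rightarrow> rat) \<Rightarrow> bool" where
  "rq k F \<longleftrightarrow> rc k (\<lambda>xs. rcode (F xs))"

named_theorems rq_intros

lemma rq_cong: assumes "rq k F" "\<And>xs. length xs = k \<Longrightarrow> F xs = G xs" shows "rq k G"
  using assms(1) unfolding rq_def by (rule rc_cong) (simp add: assms(2))

lemma rq_norm:
  assumes "rc k P" "rc k N" "rc k B"
  shows "rq k (\<lambda>xs. (of_nat (P xs) - of_nat (N xs)) / of_nat (max 1 (B xs)))"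
proof -
  have "rc k (\<lambda>xs. LEAST c. (\<lambda>zs. npred (zs ! 0) (P (tl zs)) (N (tl zs)) (max 1 (B (tl zs)))) (c # xs) = 0)"
  proof (rule rc_mu)
    show "rc (Suc k) (\<lambda>zs. npred (zs ! 0) (P (tl zs)) (N (tl zs)) (max 1 (B (tl zs))))"
      unfolding npred_def Let_def by (intro rc_intros rc_tl assms) auto
    fix xs :: "nat list" assume "length xs = k"
    show "\<exists>c. npred ((c # xs) ! 0) (P (tl (c # xs))) (N (tl (c # xs))) (max 1 (B (tl (c # xs)))) = 0"
      using normc_zero[of "P xs" "N xs" "B xs"] by (intro exI[of _ "rcode ((of_nat (P xs) - of_nat (N xs)) / of_nat (max 1 (B xs)))"]) simp
  qed
  then show ?thesis unfolding rq_def by (rule rc_cong) (simp add: normc[simplified])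
qed

lemma rdec_alt: "rdec c = (of_nat (PP c) - of_nat (MM c)) / of_nat (max 1 (BB c))"
  unfolding rdec_def using BB_pos[of c] by (simp add: max_def)

lemma rq_rdec[rq_intros]: "rc k G \<Longrightarrow> rq k (\<lambda>xs. rdec (G xs))"
  unfolding rdec_alt by (intro rq_norm rc_intros)

lemma rq_rc: "rq k F \<Longrightarrow> rc k (\<lambda>xs. rcode (F xs))" unfolding rq_def .

lemma rq_const[rq_intros]: "rq k (\<lambda>_. q)" unfolding rq_def by (rule rc_const)

lemma rdec_add: "rdec c1 + rdec c2 = (of_nat (PP c1 * BB c2 + PP c2 * BB c1) - of_nat (MM c1 * BB c2 + MM c2 * BB c1)) / of_nat (max 1 (BB c1 * BB c2))"
proof -
  have "BB c1 * BB c2 \<ge> 1" using BB_pos[of c1] BB_pos[of c2] by simp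
  then have m: "max 1 (BB c1 * BB c2) = BB c1 * BB c2" by simp
  have p: "(of_nat (BB c1) :: rat) \<noteq> 0" "(of_nat (BB c2) :: rat) \<noteq> 0" using BB_pos[of c1] BB_pos[of c2] by auto
  show ?thesis unfolding rdec_def m using p by (simp add: field_simps)
qed

lemma rq_add[rq_intros]: "rq k F \<Longrightarrow> rq k G \<Longrightarrow> rq k (\<lambda>xs. F xs + G xs)"
proof -
  assume a: "rq k F" "rq k G"
  have "rq k (\<lambda>xs. rdec (rcode (F xs)) + rdec (rcode (G xs)))"
    unfolding rdec_add using a[THEN rq_rc] by (intro rq_norm rc_intros)
  then show ?thesis by simp
qed

lemma rdec_mult: "rdec c1 * rdec c2 = (of_nat (PP c1 * PP c2 + MM c1 * MM c2) - of_nat (PP c1 * MM c2 + MM c1 * PP c2)) / of_nat (max 1 (BB c1 * BB c2))"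
proof -
  have "BB c1 * BB c2 \<ge> 1" using BB_pos[of c1] BB_pos[of c2] by simp
  then have m: "max 1 (BB c1 * BB c2) = BB c1 * BB c2" by simp
  have p: "(of_nat (BB c1) :: rat) \<noteq> 0" "(of_nat (BB c2) :: rat) \<noteq> 0" using BB_pos[of c1] BB_pos[of c2] by auto
  show ?thesis unfolding rdec_def m using p by (simp add: field_simps)
qed

lemma rq_mult[rq_intros]: "rq k F \<Longrightarrow> rq k G \<Longrightarrow> rq k (\<lambda>xs. F xs * G xs)"
proof -
  assume a: "rq k F" "rq k G"
  have "rq k (\<lambda>xs. rdec (rcode (F xs)) * rdec (rcode (G xs)))"
    unfolding rdec_mult using a[THEN rq_rc] by (intro rq_norm rc_intros)
  then show ?thesis by simp
qed

lemma rdec_neg: "- rdec c = (of_nat (MM c) - of_nat (PP c)) / of_nat (max 1 (BB c))"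
  unfolding rdec_alt by (simp add: field_simps)

lemma rq_neg[rq_intros]: "rq k F \<Longrightarrow> rq k (\<lambda>xs. - F xs)"
proof -
  assume a: "rq k F"
  have "rq k (\<lambda>xs. - rdec (rcode (F xs)))"
    unfolding rdec_neg using a[THEN rq_rc] by (intro rq_norm rc_intros)
  then show ?thesis by simp
qed

lemma rq_diff[rq_intros]: "rq k F \<Longrightarrow> rq k G \<Longrightarrow> rq k (\<lambda>xs. F xs - G xs)"
  by (drule rq_add[OF _ rq_neg]) simp_all

lemma rdec_le: "rdec c1 \<le> rdec c2 \<longleftrightarrow> PP c1 * BB c2 + MM c2 * BB c1 \<le> PP c2 * BB c1 + MM c1 * BB c2"
proof -
  have p: "(of_nat (BB c1) :: rat) > 0" "(of_nat (BB c2) :: rat) > 0" using BB_pos[of c1] BB_pos[of c2] by auto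
  have "rdec c1 \<le> rdec c2 \<longleftrightarrow> (of_nat (PP c1) - of_nat (MM c1)) * of_nat (BB c2) \<le> (of_nat (PP c2) - of_nat (MM c2)) * (of_nat (BB c1) :: rat)"
    unfolding rdec_def using p by (simp add: divide_le_eq le_divide_eq mult.commute mult.left_commute)
  also have "\<dots> \<longleftrightarrow> of_nat (PP c1 * BB c2 + MM c2 * BB c1) \<le> (of_nat (PP c2 * BB c1 + MM c1 * BB c2) :: rat)"
    by (simp add: algebra_simps)
  also have "\<dots> \<longleftrightarrow> PP c1 * BB c2 + MM c2 * BB c1 \<le> PP c2 * BB c1 + MM c1 * BB c2"
    by (rule of_nat_le_iff)
  finally show ?thesis .
qed

lemma rq_max[rq_intros]: "rq k F \<Longrightarrow> rq k G \<Longrightarrow> rq k (\<lambda>xs. max (F xs) (G xs))"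
proof -
  assume a: "rq k F" "rq k G"
  let ?c1 = "\<lambda>xs. rcode (F xs)" and ?c2 = "\<lambda>xs. rcode (G xs)"
  have "rc k (\<lambda>xs. if PP (?c1 xs) * BB (?c2 xs) + MM (?c2 xs) * BB (?c1 xs) \<le> PP (?c2 xs) * BB (?c1 xs) + MM (?c1 xs) * BB (?c2 xs) then ?c2 xs else ?c1 xs)"
    using a[THEN rq_rc] by (intro rc_intros)
  then show ?thesis unfolding rq_def
  proof (rule rc_cong)
    fix xs :: "nat list"
    show "(if PP (?c1 xs) * BB (?c2 xs) + MM (?c2 xs) * BB (?c1 xs) \<le> PP (?c2 xs) * BB (?c1 xs) + MM (?c1 xs) * BB (?c2 xs) then ?c2 xs else ?c1 xs) = rcode (max (F xs) (G xs))"
      using rdec_le[of "?c1 xs" "?c2 xs"] by (simp add: max_def)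
  qed
qed

lemma rq_abs[rq_intros]: "rq k F \<Longrightarrow> rq k (\<lambda>xs. \<bar>F xs\<bar>)"
proof -
  assume "rq k F"
  then have "rq k (\<lambda>xs. max (F xs) (- F xs))" by (intro rq_intros)
  then show ?thesis by (rule rq_cong) (simp add: abs_if max_def)
qed

lemma rq_sum[rq_intros]:
  assumes "\<And>i. rq k (F i)"
  shows "rq k (\<lambda>xs. \<Sum>i\<in>A. F i xs)"
proof (cases "finite A")
  case True
  then show ?thesis
  proof (induction A rule: finite_induct)
    case empty then show ?case by (simp add: rq_const)
  next
    case (insert a A)
    then show ?case using assms by (simp add: rq_add)
  qed
next
  case False then show ?thesis by (simp add: rq_const)
qed

lemma rq_half_pow[rq_intros]: "rc k G \<Longrightarrow> rq k (\<lambda>xs. 2 / 2 ^ (G xs))"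
proof -
  assume a: "rc k G"
  have "rq k (\<lambda>xs. (of_nat 2 - of_nat 0) / of_nat (max 1 (2 ^ (G xs))))"
    by (intro rq_norm rc_intros a)
  then show ?thesis by (rule rq_cong) simp
qed

lemma bcode_par: "even (bcode (b # s)) \<longleftrightarrow> b" by simp

lemma bcode_inj: "bcode s = bcode t \<Longrightarrow> s = t"
proof (induction s arbitrary: t)
  case Nil then show ?case by (cases t) (auto split: if_splits)
next
  case (Cons b s)
  then show ?case
  proof (cases t)
    case Nil then show ?thesis using Cons by (simp split: if_splits)
  next
    case (Cons c t')
    have "even (bcode (b # s)) = even (bcode (c # t'))" using Cons.prems Cons by simp
    then have "b = c" unfolding bcode_par .
    then have "bcode s = bcode t'" using Cons.prems Cons by simp
    then show ?thesis using Cons.IH Cons \<open>b = c\<close> by simp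
  qed
qed

lemma bcode_surj: "\<exists>s. bcode s = n"
proof (induction n rule: less_induct)
  case (less n)
  show ?case
  proof (cases "n = 0")
    case True then show ?thesis by (intro exI[of _ "[]"]) simp
  next
    case False
    show ?thesis
    proof (cases "even n")
      case True
      define k where "k = (n - 2) div 2"
      have k: "n = 2 * k + 2" using True False unfolding k_def by (auto elim!: evenE)
      then have "k < n" by simp
      then obtain s where "bcode s = k" using less by blast
      then show ?thesis using k by (intro exI[of _ "True # s"]) simp
    next
      case odd: False
      define k where "k = n div 2"
      have k: "n = 2 * k + 1" using odd unfolding k_def by simp
      then have "k < n" by simp
      then obtain s where "bcode s = k" using less by blast
      then show ?thesis using k by (intro exI[of _ "False # s"]) simp
    qed
  qed
qed

definition bdec :: "nat \<Rightarrow> bool list" where "bdec n = (SOME s. bcode s = n)"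

lemma bcode_bdec[simp]: "bcode (bdec n) = n"
  unfolding bdec_def by (rule someI_ex[OF bcode_surj])

lemma bdec_bcode[simp]: "bdec (bcode s) = s"
  by (rule bcode_inj) simp

lemma rq_recfun[rq_intros]:
  assumes "rec_fun g" "rc k N" "rc k B"
  shows "rq k (\<lambda>xs. g (N xs) (bdec (B xs)))"
proof -
  obtain r where r: "\<forall>n s. eval r [prod_encode (n, bcode s)] (rcode (g n s))"
    using assms(1) unfolding rec_fun_def by auto
  have "rc 1 (\<lambda>xs. rcode (g (fst (prod_decode (xs ! 0))) (bdec (snd (prod_decode (xs ! 0))))))"
    unfolding rc_def
  proof (intro exI[of _ r] allI impI)
    fix xs :: "nat list" assume "length xs = 1"
    then obtain w where w: "xs = [w]" by (metis One_nat_def length_0_conv length_Suc_conv)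
    have "w = prod_encode (fst (prod_decode w), bcode (bdec (snd (prod_decode w))))" by simp
    then show "eval r xs (rcode (g (fst (prod_decode (xs ! 0))) (bdec (snd (prod_decode (xs ! 0))))))"
      using r w by (metis nth_Cons_0)
  qed
  from rc_comp1[OF this, of k "\<lambda>xs. prod_encode (N xs, B xs)"]
  show ?thesis unfolding rq_def using assms(2,3) by (simp add: rc_prod_encode)
qed

lemma rq_recnat[rq_intros]:
  assumes "rec_nat_rat q" "rc k N"
  shows "rq k (\<lambda>xs. q (N xs))"
proof -
  obtain r where r: "\<forall>n. eval r [n] (rcode (q n))"
    using assms(1) unfolding rec_nat_rat_def by auto
  have "rc 1 (\<lambda>xs. rcode (q (xs ! 0)))"
    unfolding rc_def
  proof (intro exI[of _ r] allI impI)
    fix xs :: "nat list" assume "length xs = 1"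
    then obtain w where w: "xs = [w]" by (metis One_nat_def length_0_conv length_Suc_conv)
    then show "eval r xs (rcode (q (xs ! 0)))" using r by simp
  qed
  from rc_comp1[OF this assms(2)] show ?thesis unfolding rq_def by simp
qed

primrec Mx :: "(nat \<Rightarrow> bool list \<Rightarrow> rat) \<Rightarrow> nat \<Rightarrow> bool list \<Rightarrow> rat" where
  "Mx L 0 s = L 0 s"
| "Mx L (Suc n) s = max (Mx L n s) (L (Suc n) s)"

lemma rec_fun_Mx:
  assumes L: "\<And>k N B. rc k N \<Longrightarrow> rc k B \<Longrightarrow> rq k (\<lambda>xs. L (N xs) (bdec (B xs)))"
  shows "rec_fun (Mx L)"
proof -
  define F0 where "F0 = (\<lambda>ys. rcode (L 0 (bdec (ys ! 0))))"
  define G where "G = (\<lambda>zs. rcode (max (rdec (zs ! 0)) (L (Suc (zs ! 1)) (bdec (zs ! 2)))))"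
  have F0: "rc 1 F0" unfolding F0_def using L[of 1 "\<lambda>_. 0" "\<lambda>ys. ys ! 0"]
    unfolding rq_def by (simp add: rc_intros)
  have G: "rc 3 G"
  proof -
    have "rq 3 (\<lambda>zs. max (rdec (zs ! 0)) (L (Suc (zs ! 1)) (bdec (zs ! 2))))"
      by (intro rq_max rq_rdec L rc_intros) auto
    then show ?thesis unfolding G_def rq_def .
  qed
  have P: "rc 2 (\<lambda>xs. natrec F0 G (hd xs) (tl xs))"
  proof -
    have "rc (Suc 1) (\<lambda>xs. natrec F0 G (hd xs) (tl xs))"
      using G by (intro rc_prim F0) (simp add: numeral_3_eq_3)
    then show ?thesis by (simp only: Suc_1)
  qed
  have nr: "natrec F0 G n [b] = rcode (Mx L n (bdec b))" for n b
    by (induction n) (simp_all add: F0_def G_def)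
  have "rc 1 (\<lambda>xs. (\<lambda>xs. natrec F0 G (hd xs) (tl xs)) [fst (prod_decode (xs ! 0)), snd (prod_decode (xs ! 0))])"
    using P by (intro rc_comp2) (auto intro: rc_intros)
  then obtain r where r: "\<forall>xs. length xs = 1 \<longrightarrow> eval r xs (natrec F0 G (fst (prod_decode (xs ! 0))) [snd (prod_decode (xs ! 0))])"
    unfolding rc_def by auto
  show ?thesis unfolding rec_fun_def
  proof (intro exI[of _ r] allI)
    fix n s
    show "eval r [prod_encode (n, bcode s)] (rcode (Mx L n s))"
      using r[rule_format, of "[prod_encode (n, bcode s)]"] nr by simp
  qed
qed

definition Lr :: "('n::finite \<Rightarrow> 'n \<Rightarrow> nat \<Rightarrow> bool list \<Rightarrow> rat) \<Rightarrow> ('n \<Rightarrow> 'n \<Rightarrow> nat \<Rightarrow> bool list \<Rightarrow> rat)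
   \<Rightarrow> ('n \<Rightarrow> nat \<Rightarrow> rat) \<Rightarrow> ('n \<Rightarrow> nat \<Rightarrow> rat) \<Rightarrow> nat \<Rightarrow> bool list \<Rightarrow> rat" where
  "Lr gre gim qa qb n s =
     (\<Sum>i\<in>UNIV. \<Sum>j\<in>UNIV. gre i j n s * (qa i n * qa j n + qb i n * qb j n) - gim i j n s * (qa i n * qb j n - qb i n * qa j n))
     - (\<Sum>i\<in>UNIV. \<Sum>j\<in>UNIV. \<bar>gre i j n s\<bar> + \<bar>gim i j n s\<bar>) * (2 * (2 / 2 ^ n) + (2 / 2 ^ n) * (2 / 2 ^ n))"

lemma rq_Lr:
  assumes "\<And>i j. rec_fun (gre i j)" "\<And>i j. rec_fun (gim i j)" "\<And>i. rec_nat_rat (qa i)" "\<And>i. rec_nat_rat (qb i)"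
    "rc k N" "rc k B"
  shows "rq k (\<lambda>xs. Lr gre gim qa qb (N xs) (bdec (B xs)))"
  unfolding Lr_def by (intro rq_intros assms)

lemma rec_fun_Mx_Lr:
  assumes "\<And>i j. rec_fun (gre i j)" "\<And>i j. rec_fun (gim i j)" "\<And>i. rec_nat_rat (qa i)" "\<And>i. rec_nat_rat (qb i)"
  shows "rec_fun (Mx (Lr gre gim qa qb))"
  by (rule rec_fun_Mx) (rule rq_Lr[OF assms])

lemma qform_diff: "qform (A - B) v = qform A v - qform B v"
  unfolding qform_def by (simp add: algebra_simps sum_subtractf)

lemma qform_add: "qform (A + B) v = qform A v + qform B v"
  unfolding qform_def by (simp add: algebra_simps sum.distrib)

lemma qform_zero: "qform 0 v = 0"
  unfolding qform_def by simp

lemma qform_sum: "qform (sum R F) v = (\<Sum>s\<in>F. qform (R s) v)"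
proof (cases "finite F")
  case True then show ?thesis
    by (induction F rule: finite_induct) (simp_all add: qform_zero qform_add)
qed (simp add: qform_zero)

lemma qform_scaleR: "qform (c *\<^sub>R A) v = of_real c * qform A v"
proof -
  have "(c *\<^sub>R A) $ i $ j = of_real c * A $ i $ j" for i j
    by (simp only: vector_scaleR_component) (simp add: scaleR_conv_of_real)
  then show ?thesis unfolding qform_def by (simp add: sum_distrib_left algebra_simps)
qed

lemma qform_id: "qform (mat 1) v = (\<Sum>i\<in>UNIV. cnj (v $ i) * v $ i)"
  unfolding qform_def mat_def by (simp add: if_distrib if_distribR sum.delta cong: if_cong)

lemma Re_cnj_mult_self: "Re (cnj z * z) = (cmod z)\<^sup>2"
  by (metis Re_complex_of_real complex_norm_square mult.commute)

lemma Re_qform_id: "Re (qform (mat 1) v) = (norm v)\<^sup>2"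
  unfolding qform_id norm_vec_def L2_set_def Re_sum Re_cnj_mult_self
  by (simp add: sum_nonneg)

lemma qform_bound:
  fixes G :: "complex ^ 'n ^ 'n" and x y :: "complex ^ 'n"
  assumes x1: "\<And>i. cmod (x $ i) \<le> 1" and d: "\<And>i. cmod (x $ i - y $ i) \<le> d"
  shows "\<bar>Re (qform G x) - Re (qform G y)\<bar> \<le>
           (\<Sum>i\<in>UNIV. \<Sum>j\<in>UNIV. \<bar>Re (G $ i $ j)\<bar> + \<bar>Im (G $ i $ j)\<bar>) * (2 * d + d * d)"
proof -
  have d0: "d \<ge> 0" using d[of undefined] norm_ge_zero order_trans by blast
  have trm: "cmod (cnj (x $ i) * G $ i $ j * x $ j - cnj (y $ i) * G $ i $ j * y $ j)
      \<le> (\<bar>Re (G $ i $ j)\<bar> + \<bar>Im (G $ i $ j)\<bar>) * (2 * d + d * d)" for i j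
  proof -
    let ?g = "G $ i $ j"
    have "cmod (y $ j) = cmod (x $ j - (x $ j - y $ j))" by simp
    also have "\<dots> \<le> cmod (x $ j) + cmod (x $ j - y $ j)" by (rule norm_triangle_ineq4)
    also have "\<dots> \<le> 1 + d" using x1 d by (rule add_mono)
    finally have yj: "cmod (y $ j) \<le> 1 + d" .
    have "cnj (x $ i) * ?g * x $ j - cnj (y $ i) * ?g * y $ j
        = ?g * (cnj (x $ i) * (x $ j - y $ j) + cnj (x $ i - y $ i) * y $ j)"
      by (simp add: algebra_simps)
    then have "cmod (cnj (x $ i) * ?g * x $ j - cnj (y $ i) * ?g * y $ j)
        = cmod ?g * cmod (cnj (x $ i) * (x $ j - y $ j) + cnj (x $ i - y $ i) * y $ j)"
      by (simp add: norm_mult)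
    also have "\<dots> \<le> cmod ?g * (cmod (x $ i) * cmod (x $ j - y $ j) + cmod (x $ i - y $ i) * cmod (y $ j))"
    proof (rule mult_left_mono)
      have "cmod (cnj (x $ i) * (x $ j - y $ j) + cnj (x $ i - y $ i) * y $ j)
          \<le> cmod (cnj (x $ i) * (x $ j - y $ j)) + cmod (cnj (x $ i - y $ i) * y $ j)"
        by (rule norm_triangle_ineq)
      also have "\<dots> = cmod (x $ i) * cmod (x $ j - y $ j) + cmod (x $ i - y $ i) * cmod (y $ j)"
        by (simp only: norm_mult complex_mod_cnj)
      finally show "cmod (cnj (x $ i) * (x $ j - y $ j) + cnj (x $ i - y $ i) * y $ j)
          \<le> cmod (x $ i) * cmod (x $ j - y $ j) + cmod (x $ i - y $ i) * cmod (y $ j)" .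
    qed simp
    also have "\<dots> \<le> cmod ?g * (1 * d + d * (1 + d))"
      by (intro mult_left_mono add_mono mult_mono x1 d yj) (auto simp: d0)
    also have "\<dots> = cmod ?g * (2 * d + d * d)" by (simp add: algebra_simps)
    also have "\<dots> \<le> (\<bar>Re ?g\<bar> + \<bar>Im ?g\<bar>) * (2 * d + d * d)"
      by (rule mult_right_mono[OF cmod_le]) (simp add: d0)
    finally show ?thesis .
  qed
  have "\<bar>Re (qform G x) - Re (qform G y)\<bar> \<le> cmod (qform G x - qform G y)"
    by (metis abs_Re_le_cmod minus_complex.sel(1))
  also have "qform G x - qform G y = (\<Sum>i\<in>UNIV. \<Sum>j\<in>UNIV. cnj (x $ i) * G $ i $ j * x $ j - cnj (y $ i) * G $ i $ j * y $ j)"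
    unfolding qform_def by (simp add: sum_subtractf)
  also have "cmod \<dots> \<le> (\<Sum>i\<in>UNIV. \<Sum>j\<in>UNIV. cmod (cnj (x $ i) * G $ i $ j * x $ j - cnj (y $ i) * G $ i $ j * y $ j))"
    by (rule order_trans[OF norm_sum]) (intro sum_mono norm_sum)
  also have "\<dots> \<le> (\<Sum>i\<in>UNIV. \<Sum>j\<in>UNIV. (\<bar>Re (G $ i $ j)\<bar> + \<bar>Im (G $ i $ j)\<bar>) * (2 * d + d * d))"
    by (intro sum_mono trm)
  also have "\<dots> = (\<Sum>i\<in>UNIV. \<Sum>j\<in>UNIV. \<bar>Re (G $ i $ j)\<bar> + \<bar>Im (G $ i $ j)\<bar>) * (2 * d + d * d)"
    by (simp add: sum_distrib_right)
  finally show ?thesis .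
qed

lemma Mx_mono: "Mx L n s \<le> Mx L (Suc n) s" by simp

lemma Mx_ge: "L n s \<le> Mx L n s" by (cases n) auto

lemma Mx_le: "(\<And>k. real_of_rat (L k s) \<le> b) \<Longrightarrow> real_of_rat (Mx L n s) \<le> b"
  by (induction n) (auto simp: max_def)

definition sing :: "'n::finite \<Rightarrow> complex \<Rightarrow> complex ^ 'n ^ 'n" where
  "sing i0 d = (\<chi> i j. if i = i0 then if j = i0 then d else 0 else 0)"

lemma qform_sing: "qform (sing i0 d) v = cnj (v $ i0) * d * v $ i0"
proof -
  have inner: "(\<Sum>j\<in>UNIV. cnj (v $ i) * sing i0 d $ i $ j * v $ j) = (if i = i0 then cnj (v $ i0) * d * v $ i0 else 0)" for i
  proof (cases "i = i0")
    case True
    have "cnj (v $ i) * sing i0 d $ i $ j * v $ j = (if j = i0 then cnj (v $ i0) * d * v $ i0 else 0)" for j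
      using True unfolding sing_def by simp
    then show ?thesis using True by (simp only: sum.delta' finite_UNIV) simp
  next
    case False
    then show ?thesis unfolding sing_def by simp
  qed
  show ?thesis unfolding qform_def inner by simp
qed

lemma Re_qform_sing: "Re (qform (sing i0 (of_real a)) v) = a * (cmod (v $ i0))\<^sup>2"
  unfolding qform_sing cmod_power2 by (simp add: power2_eq_square algebra_simps)

lemma sing_diff: "sing i0 a - sing i0 b = sing i0 (a - b)"
  unfolding sing_def by (simp add: vec_eq_iff)

lemma sing_add: "sing i0 a + sing i0 b = sing i0 (a + b)"
  unfolding sing_def by (simp add: vec_eq_iff)

lemma sing_zero: "sing i0 0 = 0"
  unfolding sing_def by (simp add: vec_eq_iff)

lemma sing_sum: "(\<Sum>s\<in>F. sing i0 (d s)) = sing i0 (sum d F)"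
proof (cases "finite F")
  case True then show ?thesis
    by (induction F rule: finite_induct) (simp_all add: sing_zero sing_add)
qed (simp add: sing_zero)

lemma sing_scaleR: "c *\<^sub>R sing i0 a = sing i0 (c *\<^sub>R a)"
  unfolding sing_def by (simp add: vec_eq_iff)

lemma hermitian_sing: "hermitian (sing i0 (of_real a))"
  unfolding hermitian_def sing_def by auto

lemma hermitian_mat1: "hermitian (mat 1)"
  unfolding hermitian_def mat_def by auto

lemma hermitian_diff:
  assumes "hermitian A" "hermitian B" shows "hermitian (A - B)"
  unfolding hermitian_def
proof (intro allI)
  fix i j
  have "A $ i $ j = cnj (A $ j $ i)" "B $ i $ j = cnj (B $ j $ i)"
    using assms unfolding hermitian_def by blast+
  then show "(A - B) $ i $ j = cnj ((A - B) $ j $ i)" by simp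
qed

lemma psd_sing: "0 \<le> a \<Longrightarrow> psd (sing i0 (of_real a))"
  unfolding psd_def using hermitian_sing by (simp add: Re_qform_sing)

lemma sing_tendsto:
  assumes "(a \<longlongrightarrow> b) F"
  shows "((\<lambda>n. sing i0 (a n)) \<longlongrightarrow> sing i0 b) F"
  unfolding sing_def
proof (intro tendsto_vec_lambda)
  fix i j
  show "((\<lambda>n. if i = i0 then if j = i0 then a n else 0 else 0) \<longlongrightarrow> (if i = i0 then if j = i0 then b else 0 else 0)) F"
    by (cases "i = i0"; cases "j = i0") (simp_all add: assms)
qed

lemma rec_fun_const: "rec_fun (\<lambda>n s. c)"
proof -
  obtain r where r: "\<forall>xs. length xs = 1 \<longrightarrow> eval r xs (rcode c)"
    using rc_const[of 1 "rcode c"] unfolding rc_def by auto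
  show ?thesis unfolding rec_fun_def
  proof (intro exI[of _ r] allI)
    fix n s
    have "length [prod_encode (n, bcode s)] = 1" by simp
    then show "eval r [prod_encode (n, bcode s)] (rcode c)" using r by blast
  qed
qed

lemma Lr_real:
  fixes gre gim :: "'n::finite \<Rightarrow> 'n \<Rightarrow> nat \<Rightarrow> bool list \<Rightarrow> rat" and qa qb :: "'n \<Rightarrow> nat \<Rightarrow> rat" and n :: nat and s :: "bool list"
  defines "G \<equiv> (\<chi> i j. Complex (of_rat (gre i j n s)) (of_rat (gim i j n s)))"
  and "y \<equiv> (\<chi> i. Complex (of_rat (qa i n)) (of_rat (qb i n)))"
  shows "real_of_rat (Lr gre gim qa qb n s) = Re (qform G y)
     - (\<Sum>i\<in>UNIV. \<Sum>j\<in>UNIV. \<bar>Re (G $ i $ j)\<bar> + \<bar>Im (G $ i $ j)\<bar>) * real_of_rat (2 * (2 / 2 ^ n) + (2 / 2 ^ n) * (2 / 2 ^ n))"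
proof -
  define T where "T = (\<lambda>i j. gre i j n s * (qa i n * qa j n + qb i n * qb j n) - gim i j n s * (qa i n * qb j n - qb i n * qa j n))"
  define A where "A = (\<lambda>i j. \<bar>gre i j n s\<bar> + \<bar>gim i j n s\<bar>)"
  define fac :: rat where "fac = 2 * (2 / 2 ^ n) + (2 / 2 ^ n) * (2 / 2 ^ n)"
  have L: "Lr gre gim qa qb n s = (\<Sum>i\<in>UNIV. \<Sum>j\<in>UNIV. T i j) - (\<Sum>i\<in>UNIV. \<Sum>j\<in>UNIV. A i j) * fac"
    unfolding Lr_def T_def A_def fac_def by simp
  have t: "Re (cnj (y $ i) * G $ i $ j * y $ j) = real_of_rat (T i j)" for i j
    unfolding G_def y_def T_def by (simp add: of_rat_diff of_rat_add of_rat_mult algebra_simps)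
  have a: "\<bar>Re (G $ i $ j)\<bar> + \<bar>Im (G $ i $ j)\<bar> = real_of_rat (A i j)" for i j
    unfolding G_def A_def by (simp add: of_rat_add)
  have "real_of_rat (Lr gre gim qa qb n s) = (\<Sum>i\<in>UNIV. \<Sum>j\<in>UNIV. real_of_rat (T i j)) - (\<Sum>i\<in>UNIV. \<Sum>j\<in>UNIV. real_of_rat (A i j)) * real_of_rat fac"
    unfolding L by (simp only: of_rat_diff of_rat_mult of_rat_sum)
  also have "\<dots> = Re (qform G y) - (\<Sum>i\<in>UNIV. \<Sum>j\<in>UNIV. \<bar>Re (G $ i $ j)\<bar> + \<bar>Im (G $ i $ j)\<bar>) * real_of_rat fac"
    unfolding qform_def Re_sum t a ..
  finally show ?thesis unfolding fac_def .
qed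

theorem mainTheorem11:
  fixes M :: "bool list \<Rightarrow> complex ^ 'n ^ 'n" and x :: "complex ^ 'n"
  assumes "universal_sPOVM M" and "computable_vec x" and "norm x = 1"
  shows "universal_probability (\<lambda>s. Re (qform (M s) x))"
proof -
  define m where "m = (\<lambda>s. Re (qform (M s) x))"
  have lcM: "lower_computable_sPOVM M"
    and univ: "\<And>R :: bool list \<Rightarrow> complex ^ 'n ^ 'n. lower_computable_sPOVM R \<Longrightarrow> \<exists>c>0. \<forall>s. loewner_le (c *\<^sub>R R s) (M s)"
    using assms(1) unfolding universal_sPOVM_def by auto
  have sP: "semi_POVM M" using lcM unfolding lower_computable_sPOVM_def by auto
  obtain f where f_rec: "rec_herQ_fun f" and f_lim: "\<And>s. (\<lambda>n. f n s) \<longlonglongrightarrow> M s"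
      and f_le: "\<And>n s. loewner_le (f n s) (M s)"
    using lcM unfolding lower_computable_sPOVM_def by auto
  have "\<forall>p. \<exists>g. rec_fun (fst g) \<and> rec_fun (snd g) \<and> (\<forall>n s. f n s $ fst p $ snd p = Complex (of_rat (fst g n s)) (of_rat (snd g n s)))"
  proof
    fix p :: "'n \<times> 'n"
    obtain gre gim where "rec_fun gre" "rec_fun gim" "\<forall>n s. f n s $ fst p $ snd p = Complex (of_rat (gre n s)) (of_rat (gim n s))"
      using f_rec unfolding rec_herQ_fun_def by blast
    then show "\<exists>g. rec_fun (fst g) \<and> rec_fun (snd g) \<and> (\<forall>n s. f n s $ fst p $ snd p = Complex (of_rat (fst g n s)) (of_rat (snd g n s)))"
      by (intro exI[of _ "(gre, gim)"]) simp
  qed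
  then obtain g where g: "\<forall>p. rec_fun (fst (g p)) \<and> rec_fun (snd (g p)) \<and> (\<forall>n s. f n s $ fst p $ snd p = Complex (of_rat (fst (g p) n s)) (of_rat (snd (g p) n s)))"
    using choice[of "\<lambda>p g. rec_fun (fst g) \<and> rec_fun (snd g) \<and> (\<forall>n s. f n s $ fst p $ snd p = Complex (of_rat (fst g n s)) (of_rat (snd g n s)))"]
    by blast
  define GRE where "GRE = (\<lambda>i j. fst (g (i, j)))"
  define GIM where "GIM = (\<lambda>i j. snd (g (i, j)))"
  have GRE: "rec_fun (GRE i j)" for i j using g unfolding GRE_def by auto
  have GIM: "rec_fun (GIM i j)" for i j using g unfolding GIM_def by auto
  have fij: "f n s $ i $ j = Complex (of_rat (GRE i j n s)) (of_rat (GIM i j n s))" for n s i j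
    using g unfolding GRE_def GIM_def by (metis fst_conv snd_conv)
  have fvec: "f n s = (\<chi> i j. Complex (of_rat (GRE i j n s)) (of_rat (GIM i j n s)))" for n s
    by (simp add: vec_eq_iff fij)
  have "\<forall>i. \<exists>q. (rec_nat_rat (fst q) \<and> (\<forall>n. \<bar>Re (x $ i) - of_rat (fst q n)\<bar> \<le> (1/2)^n)) \<and>
               (rec_nat_rat (snd q) \<and> (\<forall>n. \<bar>Im (x $ i) - of_rat (snd q n)\<bar> \<le> (1/2)^n))"
  proof
    fix i
    obtain q1 where "rec_nat_rat q1" "\<forall>n. \<bar>Re (x $ i) - of_rat (q1 n)\<bar> \<le> (1/2)^n"
      using assms(2) unfolding computable_vec_def computable_real_def by blast
    moreover obtain q2 where "rec_nat_rat q2" "\<forall>n. \<bar>Im (x $ i) - of_rat (q2 n)\<bar> \<le> (1/2)^n"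
      using assms(2) unfolding computable_vec_def computable_real_def by blast
    ultimately show "\<exists>q. (rec_nat_rat (fst q) \<and> (\<forall>n. \<bar>Re (x $ i) - of_rat (fst q n)\<bar> \<le> (1/2)^n)) \<and>
               (rec_nat_rat (snd q) \<and> (\<forall>n. \<bar>Im (x $ i) - of_rat (snd q n)\<bar> \<le> (1/2)^n))"
      by (intro exI[of _ "(q1, q2)"]) simp
  qed
  then obtain qq where qq: "\<forall>i. (rec_nat_rat (fst (qq i)) \<and> (\<forall>n. \<bar>Re (x $ i) - of_rat (fst (qq i) n)\<bar> \<le> (1/2)^n)) \<and>
               (rec_nat_rat (snd (qq i)) \<and> (\<forall>n. \<bar>Im (x $ i) - of_rat (snd (qq i) n)\<bar> \<le> (1/2)^n))"
    using choice[of "\<lambda>i q. (rec_nat_rat (fst q) \<and> (\<forall>n. \<bar>Re (x $ i) - of_rat (fst q n)\<bar> \<le> (1/2)^n)) \<and>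
               (rec_nat_rat (snd q) \<and> (\<forall>n. \<bar>Im (x $ i) - of_rat (snd q n)\<bar> \<le> (1/2)^n))"]
    by blast
  define QA where "QA = (\<lambda>i. fst (qq i))"
  define QB where "QB = (\<lambda>i. snd (qq i))"
  have QA: "rec_nat_rat (QA i)" for i using qq unfolding QA_def by blast
  have QB: "rec_nat_rat (QB i)" for i using qq unfolding QB_def by blast
  have QAb: "\<bar>Re (x $ i) - of_rat (QA i n)\<bar> \<le> (1/2)^n" for i n using qq unfolding QA_def by blast
  have QBb: "\<bar>Im (x $ i) - of_rat (QB i n)\<bar> \<le> (1/2)^n" for i n using qq unfolding QB_def by blast

  define L where "L = Lr GRE GIM QA QB"
  define F where "F = Mx L"
  have recF: "rec_fun F" unfolding F_def L_def by (rule rec_fun_Mx_Lr[OF GRE GIM QA QB])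

  define y where "y n = (\<chi> i. Complex (of_rat (QA i n)) (of_rat (QB i n)))" for n
  define dl where "dl n = 2 * (1/2::real) ^ n" for n
  define S where "S n s = (\<Sum>i\<in>UNIV. \<Sum>j\<in>UNIV. \<bar>Re (f n s $ i $ j)\<bar> + \<bar>Im (f n s $ i $ j)\<bar>)" for n s
  have dlr: "real_of_rat (2 * (2 / 2 ^ n) + (2 / 2 ^ n) * (2 / 2 ^ n)) = 2 * dl n + dl n * dl n" for n
    unfolding dl_def by (simp add: of_rat_add of_rat_mult of_rat_divide of_rat_power power_one_over)
  have Lreal: "real_of_rat (L n s) = Re (qform (f n s) (y n)) - S n s * (2 * dl n + dl n * dl n)" for n s
    unfolding L_def S_def y_def fvec dlr[symmetric] by (rule Lr_real)
  have x1: "cmod (x $ i) \<le> 1" for i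
  proof -
    have "cmod (x $ i) \<le> norm x" by (rule Finite_Cartesian_Product.norm_nth_le)
    then show ?thesis using assms(3) by simp
  qed
  have xy: "cmod (x $ i - y n $ i) \<le> dl n" for i n
  proof -
    have "cmod (x $ i - y n $ i) \<le> \<bar>Re (x $ i - y n $ i)\<bar> + \<bar>Im (x $ i - y n $ i)\<bar>" by (rule cmod_le)
    also have "\<dots> \<le> (1/2)^n + (1/2)^n" unfolding y_def using QAb[of i n] QBb[of i n] by (intro add_mono) simp_all
    finally show ?thesis unfolding dl_def by simp
  qed
  have L_le: "real_of_rat (L n s) \<le> m s" for n s
  proof -
    have "psd (M s - f n s)" using f_le[of n s] unfolding loewner_le_def .
    then have "0 \<le> Re (qform (M s - f n s) x)" unfolding psd_def by blast
    then have h1: "Re (qform (f n s) x) \<le> m s" unfolding m_def qform_diff by simp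
    have "\<bar>Re (qform (f n s) x) - Re (qform (f n s) (y n))\<bar> \<le> S n s * (2 * dl n + dl n * dl n)"
      unfolding S_def by (rule qform_bound[OF x1 xy])
    then show ?thesis using h1 Lreal[of n s] by linarith
  qed
  have L_lim: "(\<lambda>n. real_of_rat (L n s)) \<longlonglongrightarrow> m s" for s
  proof -
    have fl: "(\<lambda>n. f n s $ i $ j) \<longlonglongrightarrow> M s $ i $ j" for i j
      using f_lim[of s] by (intro tendsto_vec_nth)
    have yl: "(\<lambda>n. y n $ i) \<longlonglongrightarrow> x $ i" for i
    proof -
      have a: "(\<lambda>n. real_of_rat (QA i n)) \<longlonglongrightarrow> Re (x $ i)"
      proof -
        have "(\<lambda>n. real_of_rat (QA i n) - Re (x $ i)) \<longlonglongrightarrow> 0"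
          by (rule Lim_null_comparison[where g="\<lambda>n. (1/2)^n"])
             (auto intro!: always_eventually LIMSEQ_power_zero simp: abs_minus_commute QAb)
        then show ?thesis by (rule LIM_zero_cancel)
      qed
      have b: "(\<lambda>n. real_of_rat (QB i n)) \<longlonglongrightarrow> Im (x $ i)"
      proof -
        have "(\<lambda>n. real_of_rat (QB i n) - Im (x $ i)) \<longlonglongrightarrow> 0"
          by (rule Lim_null_comparison[where g="\<lambda>n. (1/2)^n"])
             (auto intro!: always_eventually LIMSEQ_power_zero simp: abs_minus_commute QBb)
        then show ?thesis by (rule LIM_zero_cancel)
      qed
      have "(\<lambda>n. Complex (real_of_rat (QA i n)) (real_of_rat (QB i n))) \<longlonglongrightarrow> Complex (Re (x $ i)) (Im (x $ i))"
        by (rule tendsto_Complex[OF a b])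
      then show ?thesis unfolding y_def by simp
    qed
    have "(\<lambda>n. qform (f n s) (y n)) \<longlonglongrightarrow> qform (M s) x"
      unfolding qform_def by (intro tendsto_sum tendsto_mult tendsto_cnj fl yl)
    then have V: "(\<lambda>n. Re (qform (f n s) (y n))) \<longlonglongrightarrow> m s" unfolding m_def by (rule tendsto_Re)
    have Sl: "(\<lambda>n. S n s) \<longlonglongrightarrow> (\<Sum>i\<in>UNIV. \<Sum>j\<in>UNIV. \<bar>Re (M s $ i $ j)\<bar> + \<bar>Im (M s $ i $ j)\<bar>)"
      unfolding S_def by (intro tendsto_sum tendsto_add tendsto_rabs tendsto_Re tendsto_Im fl)
    have dl0: "dl \<longlonglongrightarrow> 0" unfolding dl_def by (intro tendsto_mult_right_zero LIMSEQ_power_zero) simp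
    have "(\<lambda>n. S n s * (2 * dl n + dl n * dl n)) \<longlonglongrightarrow> (\<Sum>i\<in>UNIV. \<Sum>j\<in>UNIV. \<bar>Re (M s $ i $ j)\<bar> + \<bar>Im (M s $ i $ j)\<bar>) * (2 * 0 + 0 * 0)"
      by (intro tendsto_intros Sl dl0)
    then have E: "(\<lambda>n. S n s * (2 * dl n + dl n * dl n)) \<longlonglongrightarrow> 0" by simp
    show ?thesis unfolding Lreal using tendsto_diff[OF V E] by simp
  qed
  have F_lim: "(\<lambda>n. real_of_rat (F n s)) \<longlonglongrightarrow> m s" for s
  proof (rule tendsto_sandwich[of "\<lambda>n. real_of_rat (L n s)" _ _ "\<lambda>n. m s"])
    show "eventually (\<lambda>n. real_of_rat (L n s) \<le> real_of_rat (F n s)) sequentially"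
      unfolding F_def by (intro always_eventually allI) (simp add: of_rat_less_eq Mx_ge)
    show "eventually (\<lambda>n. real_of_rat (F n s) \<le> m s) sequentially"
      unfolding F_def by (intro always_eventually allI Mx_le L_le)
  qed (auto simp: L_lim)
  have F_mono: "F n s \<le> F (Suc n) s" for n s unfolding F_def by (rule Mx_mono)
  have m_nonneg: "0 \<le> m s" for s
  proof -
    have "loewner_le 0 (M s)" using sP unfolding semi_POVM_def by auto
    then show ?thesis unfolding loewner_le_def psd_def m_def by simp
  qed
  have m_sum: "sum m F' \<le> 1" if "finite F'" for F'
  proof -
    have "loewner_le (sum M F') (mat 1)" using sP that unfolding semi_POVM_def by auto
    then have "0 \<le> Re (qform (mat 1 - sum M F') x)" unfolding loewner_le_def psd_def by blast
    then show ?thesis unfolding qform_diff qform_sum minus_complex.sel Re_qform_id m_def assms(3) by (simp add: Re_sum)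
  qed
  have lc: "lower_computable_sm m"
    unfolding lower_computable_sm_def semi_measure_def
    using m_nonneg m_sum recF F_lim F_mono by blast
  have dom: "\<exists>c>0. \<forall>s. c * r s \<le> m s" if r: "lower_computable_sm r" for r
  proof -
    obtain fr where fr_rec: "rec_fun fr" and fr_lim: "\<And>s. (\<lambda>n. real_of_rat (fr n s)) \<longlonglongrightarrow> r s"
        and fr_mono: "\<And>n s. fr n s \<le> fr (Suc n) s"
      using r unfolding lower_computable_sm_def by blast
    have r_nonneg: "\<And>s. 0 \<le> r s" and r_sum: "\<And>F. finite F \<Longrightarrow> sum r F \<le> 1"
      using r unfolding lower_computable_sm_def semi_measure_def by auto
    have fr_le: "real_of_rat (fr n s) \<le> r s" for n s
      by (rule incseq_le[OF _ fr_lim]) (simp add: incseq_SucI of_rat_less_eq fr_mono)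
    obtain i0 where xi0: "x $ i0 \<noteq> 0"
    proof -
      have "x \<noteq> 0" using assms(3) by auto
      then show ?thesis using that by (auto simp: vec_eq_iff)
    qed
    define R where "R s = sing i0 (of_real (r s))" for s
    define fa where "fa n s = sing i0 (of_real (real_of_rat (fr n s)))" for n s
    have "lower_computable_sPOVM R"
      unfolding lower_computable_sPOVM_def
    proof (intro conjI exI[of _ fa])
      show "semi_POVM R"
        unfolding semi_POVM_def
      proof (intro conjI allI impI)
        fix s
        show "hermitian (R s)" unfolding R_def by (rule hermitian_sing)
        show "loewner_le 0 (R s)" unfolding loewner_le_def R_def using psd_sing[OF r_nonneg[of s], of i0] by simp
      next
        fix F' :: "bool list set" assume fin: "finite F'"
        have sR: "sum R F' = sing i0 (of_real (sum r F'))" unfolding R_def sing_sum by simp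
        show "loewner_le (sum R F') (mat 1)"
          unfolding loewner_le_def psd_def sR
        proof (intro conjI allI)
          show "hermitian (mat 1 - sing i0 (of_real (sum r F')))" by (intro hermitian_diff hermitian_mat1 hermitian_sing)
          fix v :: "complex ^ 'n"
          have h1: "(cmod (v $ i0))^2 \<le> (norm v)^2" by (intro power_mono Finite_Cartesian_Product.norm_nth_le) simp
          have h2: "sum r F' * (cmod (v $ i0))^2 \<le> 1 * (cmod (v $ i0))^2" by (intro mult_right_mono r_sum fin) simp
          have "sum r F' * (cmod (v $ i0))^2 \<le> (norm v)^2" using h1 h2 by linarith
          then show "0 \<le> Re (qform (mat 1 - sing i0 (of_real (sum r F'))) v)"
            unfolding qform_diff minus_complex.sel Re_qform_id Re_qform_sing by simp
        qed
      qed
      show "rec_herQ_fun fa"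
        unfolding rec_herQ_fun_def
      proof (intro conjI allI)
        fix n s show "hermitian (fa n s)" unfolding fa_def by (rule hermitian_sing)
      next
        fix i j
        show "\<exists>gre gim. rec_fun gre \<and> rec_fun gim \<and> (\<forall>n s. fa n s $ i $ j = Complex (of_rat (gre n s)) (of_rat (gim n s)))"
        proof (cases "i = i0 \<and> j = i0")
          case True
          then show ?thesis using fr_rec rec_fun_const[of 0]
            by (intro exI[of _ fr] exI[of _ "\<lambda>n s. 0"]) (simp add: fa_def sing_def complex_eq_iff)
        next
          case False
          then show ?thesis using rec_fun_const[of 0]
            by (intro exI[of _ "\<lambda>n s. 0"] exI[of _ "\<lambda>n s. 0"]) (auto simp: fa_def sing_def complex_eq_iff)
        qed
      qed
      show "\<forall>s. (\<lambda>n. fa n s) \<longlonglongrightarrow> R s" unfolding fa_def R_def by (intro allI sing_tendsto tendsto_of_real fr_lim)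
      show "\<forall>n s. loewner_le (fa n s) (R s)"
      proof (intro allI)
        fix n s
        have "psd (sing i0 (of_real (r s - real_of_rat (fr n s))))" using fr_le[of n s] by (intro psd_sing) simp
        then show "loewner_le (fa n s) (R s)" unfolding loewner_le_def fa_def R_def sing_diff by simp
      qed
    qed
    then obtain c where c: "c > 0" "\<And>s. loewner_le (c *\<^sub>R R s) (M s)" using univ by blast
    have "c * (cmod (x $ i0))^2 * r s \<le> m s" for s
    proof -
      have "0 \<le> Re (qform (M s - c *\<^sub>R R s) x)" using c(2)[of s] unfolding loewner_le_def psd_def by blast
      then show ?thesis unfolding qform_diff qform_scaleR R_def m_def minus_complex.sel
        by (simp add: Re_qform_sing algebra_simps)
    qed
    moreover have "c * (cmod (x $ i0))^2 > 0" using c(1) xi0 by simp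
    ultimately show ?thesis by blast
  qed
  have "universal_probability m" unfolding universal_probability_def using lc dom by blast
  then show ?thesis unfolding m_def .
qed


end
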